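(* The polyhedron $$\mathcal{P}^{\text{odd-cover-dir}}:=\Big\{x\in\mathbb{R}^{E}_+ : \sum_{e\in P}x_e\ge 1 \text{ for every } s\rightarrow t \text{ odd-path } P \text{ in } D\Big\}$$ is not necessarily half-integral for directed acyclic graphs $D=(V,E)$ with distinct nodes $s,t\in V$. That is, there exist a DAG $D$ and nodes $s,t$ for which $\mathcal{P}^{\text{odd-cover-dir}}$ has an extreme point with some coordinate that is not an integer multiple of $1/2$.
   Context: Paths are simple directed paths. An odd-path is a path with an odd number of edges. A polyhedron is half-integral if every coordinate of each of its extreme points is an integer multiple of $1/2$. *)

theory Defs
  imports Complex_Main
begin

definition digraph :: "'a set \<Rightarrow> ('a \<times> 'a) set \<Rightarrow> bool" where
  "digraph V E \<longleftrightarrow> finite V \<and> E \<subseteq> V \<times> V"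

definition acyclic_digraph :: "'a set \<Rightarrow> ('a \<times> 'a) set \<Rightarrow> bool" where
  "acyclic_digraph V E \<longleftrightarrow> digraph V E \<and> (\<forall>v. (v, v) \<notin> E\<^sup>+)"

fun path_arcs :: "'a list \<Rightarrow> ('a \<times> 'a) list" where
  "path_arcs (u # v # vs) = (u, v) # path_arcs (v # vs)"
| "path_arcs _ = []"

definition st_path :: "('a \<times> 'a) set \<Rightarrow> 'a \<Rightarrow> 'a \<Rightarrow> 'a list \<Rightarrow> bool" where
  "st_path E s t p \<longleftrightarrow> p \<noteq> [] \<and> hd p = s \<and> last p = t \<and> distinct p
     \<and> set (path_arcs p) \<subseteq> E"

definition odd_st_path :: "('a \<times> 'a) set \<Rightarrow> 'a \<Rightarrow> 'a \<Rightarrow> 'a list \<Rightarrow> bool" where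
  "odd_st_path E s t p \<longleftrightarrow> st_path E s t p \<and> odd (length (path_arcs p))"

text \<open>The polyhedron P^{odd-cover-dir} in R^E, with vectors represented as functions
  that vanish outside E.\<close>
definition odd_cover_dir :: "('a \<times> 'a) set \<Rightarrow> 'a \<Rightarrow> 'a \<Rightarrow> (('a \<times> 'a) \<Rightarrow> real) set" where
  "odd_cover_dir E s t = {x. (\<forall>e. e \<notin> E \<longrightarrow> x e = 0) \<and> (\<forall>e\<in>E. x e \<ge> 0)
     \<and> (\<forall>p. odd_st_path E s t p \<longrightarrow> (\<Sum>e\<in>set (path_arcs p). x e) \<ge> 1)}"

definition extreme_pt :: "('b \<Rightarrow> real) \<Rightarrow> ('b \<Rightarrow> real) set \<Rightarrow> bool" where
  "extreme_pt x S \<longleftrightarrow> x \<in> S \<and>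
     \<not> (\<exists>y\<in>S. \<exists>z\<in>S. \<exists>u::real. 0 < u \<and> u < 1 \<and> y \<noteq> x \<and> z \<noteq> x
            \<and> x = (\<lambda>e. u * y e + (1 - u) * z e))"

definition half_integral_val :: "real \<Rightarrow> bool" where
  "half_integral_val r \<longleftrightarrow> (\<exists>k::int. r = of_int k / 2)"

end

theory Submission
  imports Defs
begin

definition EE :: "(nat \<times> nat) set" where
  "EE = {(0,1),(0,2),(1,2),(2,3),(2,4),(2,5),(3,4),(3,6),(4,5),(4,6),(5,6)}"

definition RR :: "nat \<Rightarrow> nat list set" where
  "RR v = (if v = 6 then {[6]} else if v = 5 then {[5,6]}
     else if v = 4 then {[4,5,6],[4,6]}
     else if v = 3 then {[3,4,5,6],[3,4,6],[3,6]}
     else if v = 2 then {[2,3,4,5,6],[2,3,4,6],[2,3,6],[2,4,5,6],[2,4,6],[2,5,6]}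
     else if v = 1 then {[1,2,3,4,5,6],[1,2,3,4,6],[1,2,3,6],[1,2,4,5,6],[1,2,4,6],[1,2,5,6]}
     else if v = 0 then {[0,1,2,3,4,5,6],[0,1,2,3,4,6],[0,1,2,3,6],[0,1,2,4,5,6],[0,1,2,4,6],[0,1,2,5,6],
                         [0,2,3,4,5,6],[0,2,3,4,6],[0,2,3,6],[0,2,4,5,6],[0,2,4,6],[0,2,5,6]}
     else {})"

lemma step: "(a,b) \<in> EE \<Longrightarrow> p \<in> RR b \<Longrightarrow> a#p \<in> RR a"
  unfolding EE_def
  by (elim insertE emptyE; simp add: RR_def; elim disjE; simp)

lemma all_paths:
  "set (path_arcs (v#vs)) \<subseteq> EE \<Longrightarrow> last (v#vs) = 6 \<Longrightarrow> v#vs \<in> RR v"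
proof (induction vs arbitrary: v)
  case Nil
  then show ?case by (simp add: RR_def)
next
  case (Cons w ws)
  have e: "(v,w) \<in> EE" and r: "set (path_arcs (w#ws)) \<subseteq> EE" using Cons.prems(1) by auto
  have "w#ws \<in> RR w" using Cons.IH[OF r] Cons.prems(2) by simp
  then show ?case by (rule step[OF e])
qed

lemma tight:
  fixes a b c u :: real
  assumes "a \<ge> c" "b \<ge> c" "u * a + (1 - u) * b = c" "0 < u" "u < 1"
  shows "a = c"
proof -
  have 1: "u * (a - c) \<ge> 0" using assms(1,4) by (intro mult_nonneg_nonneg) auto
  have 2: "(1 - u) * (b - c) \<ge> 0" using assms(2,5) by (intro mult_nonneg_nonneg) auto
  have 3: "u * (a - c) + (1 - u) * (b - c) = (u * a + (1 - u) * b) - c"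
    by (simp add: algebra_simps)
  have "u * (a - c) = 0" using 1 2 3 assms(3) by linarith
  then show ?thesis using assms(4) by simp
qed

lemma tight_sum:
  fixes y z :: "'b \<Rightarrow> real"
  assumes "sum y A \<ge> c" "sum z A \<ge> c" "sum (\<lambda>e. u * y e + (1 - u) * z e) A = c" "0 < u" "u < 1"
  shows "sum y A = c"
proof -
  have "sum (\<lambda>e. u * y e + (1 - u) * z e) A = u * sum y A + (1 - u) * sum z A"
    by (simp add: sum.distrib sum_distrib_left)
  then have "u * sum y A + (1 - u) * sum z A = c" using assms(3) by simp
  from tight[OF assms(1,2) this assms(4,5)] show ?thesis .
qed

definition xx :: "nat \<times> nat \<Rightarrow> real" where
  "xx e = (if e = (0,2) \<or> e = (2,4) \<or> e = (4,6) then 1/3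
           else if e = (2,3) \<or> e = (5,6) then 2/3 else 0)"

lemma acyc: "acyclic_digraph {0..6} EE"
proof -
  have "(a,b) \<in> EE\<^sup>+ \<Longrightarrow> a < b" for a b
    by (induct rule: trancl_induct) (auto simp: EE_def)
  moreover have "EE \<subseteq> {0..6} \<times> {0..6}" by (auto simp: EE_def)
  ultimately show ?thesis unfolding acyclic_digraph_def digraph_def by blast
qed

lemma odd_paths:
  "odd_st_path EE 0 6 p \<Longrightarrow> p \<in> {[0,1,2,3,4,6],[0,1,2,4,5,6],[0,2,3,4,5,6],[0,2,3,6],[0,2,4,6],[0,2,5,6]}"
proof -
  assume a: "odd_st_path EE 0 6 p"
  then have "p \<noteq> []" "hd p = 0" "last p = 6" "set (path_arcs p) \<subseteq> EE"
    by (auto simp: odd_st_path_def st_path_def)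
  then obtain vs where p: "p = 0 # vs" by (cases p) auto
  then have "p \<in> RR 0" using all_paths \<open>last p = 6\<close> \<open>set (path_arcs p) \<subseteq> EE\<close> by simp
  then have "p = [0,1,2,3,4,5,6] \<or> p = [0,1,2,3,4,6] \<or> p = [0,1,2,3,6] \<or> p = [0,1,2,4,5,6] \<or> p = [0,1,2,4,6] \<or> p = [0,1,2,5,6] \<or>
      p = [0,2,3,4,5,6] \<or> p = [0,2,3,4,6] \<or> p = [0,2,3,6] \<or> p = [0,2,4,5,6] \<or> p = [0,2,4,6] \<or> p = [0,2,5,6]"
    by (simp add: RR_def)
  then show ?thesis using a by (elim disjE) (simp_all add: odd_st_path_def)
qed

lemma op_intro:
  "odd_st_path EE 0 6 [0,1,2,3,4,6]" "odd_st_path EE 0 6 [0,1,2,4,5,6]"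
  "odd_st_path EE 0 6 [0,2,3,6]" "odd_st_path EE 0 6 [0,2,4,6]" "odd_st_path EE 0 6 [0,2,5,6]"
  by (auto simp: odd_st_path_def st_path_def EE_def)

lemma xx_mem: "xx \<in> odd_cover_dir EE 0 6"
  unfolding odd_cover_dir_def
proof (intro CollectI conjI allI ballI impI)
  fix e assume "e \<notin> EE" then show "xx e = 0" by (auto simp: xx_def EE_def)
next
  fix e show "xx e \<ge> 0" by (simp add: xx_def)
next
  fix p assume "odd_st_path EE 0 6 p"
  then have "p \<in> {[0,1,2,3,4,6],[0,1,2,4,5,6],[0,2,3,4,5,6],[0,2,3,6],[0,2,4,6],[0,2,5,6]}"
    by (rule odd_paths)
  then show "(\<Sum>e\<in>set (path_arcs p). xx e) \<ge> 1"
    by (auto simp: xx_def)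
qed

theorem theorem3:
  shows "\<exists>(V :: nat set) (E :: (nat \<times> nat) set) s t x.
           acyclic_digraph V E \<and> s \<in> V \<and> t \<in> V \<and> s \<noteq> t \<and>
           extreme_pt x (odd_cover_dir E s t) \<and>
           (\<exists>e\<in>E. \<not> half_integral_val (x e))"
proof -
  have ext: "extreme_pt xx (odd_cover_dir EE 0 6)"
    unfolding extreme_pt_def
  proof (intro conjI xx_mem notI)
    assume "\<exists>y\<in>odd_cover_dir EE 0 6. \<exists>z\<in>odd_cover_dir EE 0 6. \<exists>u::real. 0 < u \<and> u < 1 \<and> y \<noteq> xx \<and> z \<noteq> xx
            \<and> xx = (\<lambda>e. u * y e + (1 - u) * z e)"
    then obtain y z u where y: "y \<in> odd_cover_dir EE 0 6" and z: "z \<in> odd_cover_dir EE 0 6"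
      and u: "0 < u" "u < 1" and yne: "y \<noteq> xx" and xeq: "xx = (\<lambda>e. u * y e + (1 - u) * z e)"
      by blast
    have yo: "\<And>e. e \<notin> EE \<Longrightarrow> y e = 0" and yn: "\<And>e. e \<in> EE \<Longrightarrow> y e \<ge> 0"
      and yp: "\<And>p. odd_st_path EE 0 6 p \<Longrightarrow> (\<Sum>e\<in>set (path_arcs p). y e) \<ge> 1"
      using y by (auto simp: odd_cover_dir_def)
    have zn: "\<And>e. e \<in> EE \<Longrightarrow> z e \<ge> 0"
      and zp: "\<And>p. odd_st_path EE 0 6 p \<Longrightarrow> (\<Sum>e\<in>set (path_arcs p). z e) \<ge> 1"
      using z by (auto simp: odd_cover_dir_def)
    have zero: "y e = 0" if "e \<in> EE" "xx e = 0" for e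
    proof -
      have "u * y e + (1 - u) * z e = 0" using that(2) xeq by metis
      then show ?thesis using tight[of 0 "y e" "z e" u] yn zn that u by simp
    qed
    have path: "(\<Sum>e\<in>set (path_arcs p). y e) = 1"
      if "odd_st_path EE 0 6 p" "(\<Sum>e\<in>set (path_arcs p). xx e) = 1" for p
    proof -
      have "(\<Sum>e\<in>set (path_arcs p). u * y e + (1 - u) * z e) = 1" using that(2) xeq by metis
      then show ?thesis using tight_sum[of 1 y "set (path_arcs p)" z u] yp zp that u by simp
    qed
    have z1: "y (0,1) = 0" "y (1,2) = 0" "y (2,5) = 0" "y (3,4) = 0" "y (3,6) = 0" "y (4,5) = 0"
      by (rule zero; simp add: EE_def xx_def)+
    have p1: "y (0,1) + (y (1,2) + (y (2,3) + (y (3,4) + y (4,6)))) = 1"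
      using path[OF op_intro(1)] by (simp add: xx_def)
    have p2: "y (0,1) + (y (1,2) + (y (2,4) + (y (4,5) + y (5,6)))) = 1"
      using path[OF op_intro(2)] by (simp add: xx_def)
    have p3: "y (0,2) + (y (2,3) + y (3,6)) = 1"
      using path[OF op_intro(3)] by (simp add: xx_def)
    have p4: "y (0,2) + (y (2,4) + y (4,6)) = 1"
      using path[OF op_intro(4)] by (simp add: xx_def)
    have p5: "y (0,2) + (y (2,5) + y (5,6)) = 1"
      using path[OF op_intro(5)] by (simp add: xx_def)
    have v: "y (0,2) = 1/3" "y (2,4) = 1/3" "y (4,6) = 1/3" "y (2,3) = 2/3" "y (5,6) = 2/3"
      using z1 p1 p2 p3 p4 p5 by linarith+
    have "y = xx"
    proof
      fix e
      show "y e = xx e"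
      proof (cases "e \<in> EE")
        case True
        then show ?thesis using z1 v by (auto simp: EE_def xx_def)
      next
        case False
        then show ?thesis using yo[OF False] by (auto simp: EE_def xx_def)
      qed
    qed
    then show False using yne by simp
  qed
  have nh: "\<not> half_integral_val (xx (0,2))"
  proof
    assume "half_integral_val (xx (0,2))"
    then obtain k :: int where "1/3 = (of_int k / 2 :: real)" by (auto simp: half_integral_val_def xx_def)
    then have "(of_int (3 * k) :: real) = of_int 2" by simp
    then have "3 * k = 2" by (simp only: of_int_eq_iff)
    then show False by presburger
  qed
  have "(0::nat,2::nat) \<in> EE" by (simp add: EE_def)
  then show ?thesis using acyc ext nh
    by (intro exI[of _ "{0..6}"] exI[of _ EE] exI[of _ "0::nat"] exI[of _ "6::nat"] exI[of _ xx]) auto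
qed

end
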